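(* Let $G$ be a graph with no isolated vertices and let $\{u_1,\dots,u_k\}$, $k\ge4$, be a clique of $G$ such that $G-\{u_1,\dots,u_k\}$ has no isolated vertices. Then $b_{tR}(G)\le \sum_{i=1}^k \deg(u_i)-\frac{k(k+1)}{2}$.
   Context: A TRDF on $G=(V,E)$ is a function $f:V\to\{0,1,2\}$ such that every $v$ with $f(v)=0$ has a neighbor $u$ with $f(u)=2$ and the subgraph induced by $\{v:f(v)>0\}$ has no isolated vertices; $\gamma_{tR}(G)$ is its minimum weight. $b_{tR}(G)$ is the minimum $|E'|$ such that $G-E'$ has no isolated vertices and $\gamma_{tR}(G-E')>\gamma_{tR}(G)$ ($\infty$ if none). A clique is a set of pairwise adjacent vertices. *)

theory Defs
  imports Main "HOL-Library.Extended_Nat"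
begin

definition simple_graph :: "'a set \<Rightarrow> 'a set set \<Rightarrow> bool" where
  "simple_graph V E \<longleftrightarrow> finite V \<and> (\<forall>e\<in>E. e \<subseteq> V \<and> card e = 2)"

definition deg :: "'a set set \<Rightarrow> 'a \<Rightarrow> nat" where
  "deg E v = card {e\<in>E. v \<in> e}"

definition no_isolated :: "'a set \<Rightarrow> 'a set set \<Rightarrow> bool" where
  "no_isolated V E \<longleftrightarrow> (\<forall>v\<in>V. \<exists>u\<in>V. {u, v} \<in> E)"

definition is_clique :: "'a set \<Rightarrow> 'a set set \<Rightarrow> 'a set \<Rightarrow> bool" where
  "is_clique V E S \<longleftrightarrow> S \<subseteq> V \<and> (\<forall>u\<in>S. \<forall>v\<in>S. u \<noteq> v \<longrightarrow> {u, v} \<in> E)"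

text \<open>G - S: the subgraph induced by V - S.\<close>
definition del_verts_V :: "'a set \<Rightarrow> 'a set \<Rightarrow> 'a set" where
  "del_verts_V V S = V - S"

definition del_verts_E :: "'a set set \<Rightarrow> 'a set \<Rightarrow> 'a set set" where
  "del_verts_E E S = {e\<in>E. e \<inter> S = {}}"

definition is_TRDF :: "'a set \<Rightarrow> 'a set set \<Rightarrow> ('a \<Rightarrow> nat) \<Rightarrow> bool" where
  "is_TRDF V E f \<longleftrightarrow>
     (\<forall>v\<in>V. f v \<le> 2) \<and>
     (\<forall>v\<in>V. f v = 0 \<longrightarrow> (\<exists>u\<in>V. {u, v} \<in> E \<and> f u = 2)) \<and>
     (\<forall>v\<in>V. f v > 0 \<longrightarrow> (\<exists>u\<in>V. {u, v} \<in> E \<and> f u > 0))"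

definition weight :: "'a set \<Rightarrow> ('a \<Rightarrow> nat) \<Rightarrow> nat" where
  "weight V f = (\<Sum>v\<in>V. f v)"

definition gamma_tR :: "'a set \<Rightarrow> 'a set set \<Rightarrow> nat" where
  "gamma_tR V E = Inf {weight V f | f. is_TRDF V E f}"

text \<open>Total Roman bondage number; Inf of the empty set of enat is \<infinity>.\<close>
definition b_tR :: "'a set \<Rightarrow> 'a set set \<Rightarrow> enat" where
  "b_tR V E = Inf {enat (card E') | E'. E' \<subseteq> E \<and> no_isolated V (E - E')
                     \<and> gamma_tR V (E - E') > gamma_tR V E}"

end

theory Submission
  imports Defs
begin

lemma key_lower:
  fixes S :: "'a set" and H :: "'a set set" and f :: "'a \<Rightarrow> nat"
  assumes fin: "finite S" and cardS: "card S \<ge> 4"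
   and zero: "\<forall>v\<in>S. f v = 0 \<longrightarrow> (\<exists>u\<in>S. {u,v} \<in> H \<and> f u = 2)"
   and pos: "\<forall>v\<in>S. f v > 0 \<longrightarrow> (\<exists>u\<in>S. {u,v} \<in> H \<and> f u > 0)"
   and nonadj: "\<forall>w\<in>S. \<exists>v\<in>S. v \<noteq> w \<and> {v,w} \<notin> H"
   and irr: "\<forall>u. {u,u} \<notin> H"
  shows "sum f S \<ge> 4"
proof -
  have s2: "f x + f y \<le> sum f S" if "x\<in>S" "y\<in>S" "x\<noteq>y" for x y
  proof -
    have "sum f {x,y} \<le> sum f S" using that fin by (intro sum_mono2) auto
    thus ?thesis using that by simp
  qed
  have s3: "f x + f y + f z \<le> sum f S" if "x\<in>S" "y\<in>S" "z\<in>S" "x\<noteq>y" "x\<noteq>z" "y\<noteq>z" for x y z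
  proof -
    have "sum f {x,y,z} \<le> sum f S" using that fin by (intro sum_mono2) auto
    thus ?thesis using that by simp
  qed
  show ?thesis
  proof (cases "\<exists>w\<in>S. f w = 2")
    case True
    then obtain w where w: "w\<in>S" "f w = 2" by blast
    obtain v where v: "v\<in>S" "v\<noteq>w" "{v,w} \<notin> H" using nonadj w by blast
    obtain q where q: "q\<in>S" "{q,w}\<in>H" "f q > 0" using pos w by force
    have "q \<noteq> w" using q irr by auto
    have "q \<noteq> v" using q v by auto
    show ?thesis
    proof (cases "f v > 0")
      case True
      have "f w + f q + f v \<le> sum f S"
        using s3[of w q v] w q v \<open>q\<noteq>w\<close> \<open>q\<noteq>v\<close> by auto
      thus ?thesis using w q True by linarith
    next
      case False
      then obtain w' where w': "w'\<in>S" "{w',v}\<in>H" "f w' = 2" using zero v by force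
      have "w' \<noteq> w" using w' v by (auto simp: insert_commute)
      have "f w + f w' \<le> sum f S" using s2[of w w'] w w' \<open>w'\<noteq>w\<close> by auto
      thus ?thesis using w w' by linarith
    qed
  next
    case False
    hence "\<forall>v\<in>S. f v \<ge> 1" using zero by (metis less_one not_le)
    hence "sum (\<lambda>_. 1) S \<le> sum f S" by (intro sum_mono) auto
    thus ?thesis using cardS by simp
  qed
qed

theorem mainTheorem15:
  fixes V :: "'a set" and E :: "'a set set" and S :: "'a set" and k :: nat
  assumes "simple_graph V E"
    and "no_isolated V E"
    and "is_clique V E S"
    and "card S = k" and "k \<ge> 4"
    and "no_isolated (del_verts_V V S) (del_verts_E E S)"
  shows "b_tR V E \<le> enat ((\<Sum>u\<in>S. deg E u) - k * (k + 1) div 2)"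
proof -
  note sg = assms(1)[unfolded simple_graph_def]
  have finV: "finite V" using sg by blast
  have EV: "\<forall>e\<in>E. e \<subseteq> V \<and> card e = 2" using sg by blast
  have finE: "finite E" using EV finV
    by (meson PowI finite_Pow_iff rev_finite_subset subsetI)
  have SV: "S \<subseteq> V" and cl: "\<And>u v. u\<in>S \<Longrightarrow> v\<in>S \<Longrightarrow> u\<noteq>v \<Longrightarrow> {u,v}\<in>E"
    using assms(3) unfolding is_clique_def by auto
  have finS: "finite S" using SV finV finite_subset by blast
  have cardS: "card S \<ge> 4" using assms(4,5) by simp
  obtain a1 where a1: "a1 \<in> S" using cardS by fastforce
  have "card (S - {a1}) \<ge> 3" using cardS a1 finS by simp
  hence "S - {a1} \<noteq> {}" by (metis card.empty not_numeral_le_zero)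
  then obtain a2 where a2: "a2 \<in> S" "a2 \<noteq> a1" by blast
  define B where "B = S - {a1,a2}"
  have cardB: "card B = k - 2" using a1 a2 finS assms(4) unfolding B_def
    by (simp add: card_Diff_subset)
  have finB: "finite B" using finS B_def by simp
  define H where "H = (\<lambda>b. {a1,b}) ` B \<union> (\<lambda>b. {a2,b}) ` B"
  define X where "X = {e\<in>E. e \<inter> S \<noteq> {}}"
  define E' where "E' = X - H"
  have HS: "\<forall>e\<in>H. e \<subseteq> S" using a1 a2 unfolding H_def B_def by auto
  have HE: "H \<subseteq> E" using a1 a2 cl unfolding H_def B_def by auto
  have HX: "H \<subseteq> X" using HE a1 a2 unfolding H_def X_def by auto
  have finX: "finite X" using finE X_def by simp
  have finH: "finite H" using finX HX finite_subset by blast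
  have cardH: "card H = 2 * (k - 2)"
  proof -
    have i1: "inj_on (\<lambda>b. {a1,b}) B" unfolding inj_on_def B_def by (auto simp: doubleton_eq_iff)
    have i2: "inj_on (\<lambda>b. {a2,b}) B" unfolding inj_on_def B_def by (auto simp: doubleton_eq_iff)
    have d: "(\<lambda>b. {a1,b}) ` B \<inter> (\<lambda>b. {a2,b}) ` B = {}" using a2 unfolding B_def
      by (auto simp: doubleton_eq_iff)
    have "card H = card ((\<lambda>b. {a1,b}) ` B) + card ((\<lambda>b. {a2,b}) ` B)"
      unfolding H_def using d finB by (intro card_Un_disjoint) auto
    thus ?thesis using card_image[OF i1] card_image[OF i2] cardB by simp
  qed
  have EE': "E - E' = (E - X) \<union> H" using HE unfolding E'_def by auto
  have DX: "del_verts_E E S = E - X" unfolding del_verts_E_def X_def by auto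
  have touch: "\<And>u v. {u,v} \<in> E - E' \<Longrightarrow> v \<in> S \<Longrightarrow> {u,v} \<in> H"
    using EE' unfolding X_def by auto
  have touch2: "\<And>u v. {u,v} \<in> E - E' \<Longrightarrow> v \<notin> S \<Longrightarrow> u \<notin> S"
    using EE' HS unfolding X_def by auto
  have noiso: "no_isolated V (E - E')"
    unfolding no_isolated_def
  proof
    fix v assume v: "v \<in> V"
    show "\<exists>u\<in>V. {u, v} \<in> E - E'"
    proof (cases "v \<in> S")
      case False
      then obtain u where "u \<in> V - S" "{u,v} \<in> E - X"
        using assms(6) v DX unfolding no_isolated_def del_verts_V_def by blast
      thus ?thesis using EE' by auto
    next
      case True
      obtain b where b: "b \<in> B" proof -
        have "B \<noteq> {}" using cardB assms(5) by (intro notI) simp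
        thus ?thesis using that by blast
      qed
      show ?thesis
      proof (cases "v \<in> B")
        case True
        have "{a1,v} \<in> H" unfolding H_def using True by auto
        thus ?thesis using a1 SV EE' by auto
      next
        case False
        hence "v = a1 \<or> v = a2" using True B_def by auto
        hence "{b,v} \<in> H" unfolding H_def using b by (auto simp: insert_commute)
        thus ?thesis using b SV B_def EE' by auto
      qed
    qed
  qed
  define F where "F = {weight V f | f. is_TRDF V (E - E') f}"
  have "is_TRDF V (E - E') (\<lambda>_. 1)"
    using noiso unfolding is_TRDF_def no_isolated_def by auto
  hence "F \<noteq> {}" unfolding F_def by blast
  hence "Inf F \<in> F" by (rule Inf_nat_def1)
  then obtain f where f: "is_TRDF V (E - E') f" and fw: "gamma_tR V (E - E') = weight V f"
    unfolding F_def gamma_tR_def by auto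
  have f2: "\<forall>v\<in>V. f v \<le> 2" using f unfolding is_TRDF_def by blast
  have f0: "\<forall>v\<in>V. f v = 0 \<longrightarrow> (\<exists>u\<in>V. {u, v} \<in> E - E' \<and> f u = 2)" using f unfolding is_TRDF_def by blast
  have fp: "\<forall>v\<in>V. f v > 0 \<longrightarrow> (\<exists>u\<in>V. {u, v} \<in> E - E' \<and> f u > 0)" using f unfolding is_TRDF_def by blast
  have sumS: "sum f S \<ge> 4"
  proof (rule key_lower[where H=H])
    show "finite S" by fact
    show "card S \<ge> 4" by fact
    show "\<forall>v\<in>S. f v = 0 \<longrightarrow> (\<exists>u\<in>S. {u,v} \<in> H \<and> f u = 2)"
    proof (intro ballI impI)
      fix v assume "v \<in> S" "f v = 0"
      then obtain u where "{u,v} \<in> E - E'" "f u = 2" using f0 SV by blast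
      moreover have "{u,v} \<in> H" using touch calculation \<open>v\<in>S\<close> by blast
      ultimately show "\<exists>u\<in>S. {u,v} \<in> H \<and> f u = 2" using HS by blast
    qed
    show "\<forall>v\<in>S. f v > 0 \<longrightarrow> (\<exists>u\<in>S. {u,v} \<in> H \<and> f u > 0)"
    proof (intro ballI impI)
      fix v assume "v \<in> S" "f v > 0"
      then obtain u where "{u,v} \<in> E - E'" "f u > 0" using fp SV by blast
      moreover have "{u,v} \<in> H" using touch calculation \<open>v\<in>S\<close> by blast
      ultimately show "\<exists>u\<in>S. {u,v} \<in> H \<and> f u > 0" using HS by blast
    qed
    show "\<forall>w\<in>S. \<exists>v\<in>S. v \<noteq> w \<and> {v,w} \<notin> H"
    proof
      fix w assume w: "w \<in> S"
      show "\<exists>v\<in>S. v \<noteq> w \<and> {v,w} \<notin> H"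
      proof (cases "w = a1 \<or> w = a2")
        case True
        thus ?thesis
        proof
          assume "w = a1" thus ?thesis using a2 unfolding H_def B_def by (auto simp: doubleton_eq_iff)
        next
          assume "w = a2" thus ?thesis using a1 a2 unfolding H_def B_def by (auto simp: doubleton_eq_iff)
        qed
      next
        case False
        hence wB: "w \<in> B" using w B_def by auto
        have "card (B - {w}) \<ge> 1" using cardB assms(5) wB finB by simp
        hence "B - {w} \<noteq> {}" by (intro notI) simp
        then obtain v where "v \<in> B - {w}" by blast
        thus ?thesis unfolding H_def B_def using wB B_def by (auto simp: doubleton_eq_iff)
      qed
    qed
    show "\<forall>u. {u,u} \<notin> H" using a2 unfolding H_def B_def by (auto simp: doubleton_eq_iff)
  qed
  define g where "g v = (if v \<in> S then (if v = a1 then 2 else if v = a2 then 1 else 0) else f v)" for v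
  have g: "is_TRDF V E g"
    unfolding is_TRDF_def
  proof (intro conjI ballI impI)
    fix v assume "v \<in> V" thus "g v \<le> 2" using f2 g_def by auto
  next
    fix v assume v: "v \<in> V" "g v = 0"
    show "\<exists>u\<in>V. {u, v} \<in> E \<and> g u = 2"
    proof (cases "v \<in> S")
      case True
      hence "v \<noteq> a1" using v g_def by auto
      have "g a1 = 2" using a1 g_def by simp
      thus ?thesis using cl[OF a1 True] \<open>v \<noteq> a1\<close> a1 SV by (intro bexI[of _ a1]) auto
    next
      case False
      hence "f v = 0" using v g_def by auto
      then obtain u where u: "u\<in>V" "{u,v} \<in> E - E'" "f u = 2" using f0 v by blast
      hence "u \<notin> S" using touch2 False by blast
      hence "g u = f u" using g_def by simp
      thus ?thesis using u by (intro bexI[of _ u]) auto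
    qed
  next
    fix v assume v: "v \<in> V" "0 < g v"
    show "\<exists>u\<in>V. {u, v} \<in> E \<and> 0 < g u"
    proof (cases "v \<in> S")
      case True
      hence "v = a1 \<or> v = a2" using v g_def by (auto split: if_splits)
      thus ?thesis
      proof
        have "g a2 = 1" using a2 g_def by simp
        assume "v = a1" thus ?thesis using cl[OF a2(1) a1] \<open>g a2 = 1\<close> a2 SV by (intro bexI[of _ a2]) auto
      next
        have "g a1 = 2" using a1 g_def by simp
        assume "v = a2" thus ?thesis using cl[OF a1 a2(1)] \<open>g a1 = 2\<close> a1 a2 SV by (intro bexI[of _ a1]) auto
      qed
    next
      case False
      hence "f v > 0" using v g_def by auto
      then obtain u where u: "u\<in>V" "{u,v} \<in> E - E'" "f u > 0" using fp v by blast
      hence "u \<notin> S" using touch2 False by blast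
      hence "g u = f u" using g_def by simp
      thus ?thesis using u by (intro bexI[of _ u]) auto
    qed
  qed
  have wg: "weight V g = sum f (V - S) + 3"
  proof -
    have "weight V g = sum g (V - S) + sum g S"
      unfolding weight_def using finV SV by (metis sum.subset_diff)
    moreover have "sum g (V - S) = sum f (V - S)" by (intro sum.cong) (auto simp: g_def)
    moreover have "sum g S = sum g {a1,a2} + sum g (S - {a1,a2})"
      using finS a1 a2 by (metis empty_subsetI insert_subset sum.subset_diff add.commute)
    moreover have "sum g (S - {a1,a2}) = 0" by (intro sum.neutral) (auto simp: g_def)
    moreover have "sum g {a1,a2} = 3" using a1 a2 by (simp add: g_def)
    ultimately show ?thesis by simp
  qed
  have wf: "weight V f = sum f (V - S) + sum f S"
    unfolding weight_def using finV SV by (metis sum.subset_diff)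
  have "gamma_tR V E \<le> weight V g"
    unfolding gamma_tR_def using g by (intro cInf_lower) auto
  hence gam: "gamma_tR V E < gamma_tR V (E - E')" using wg wf fw sumS by linarith
  have binf: "b_tR V E \<le> enat (card E')"
    unfolding b_tR_def
    by (rule Inf_lower) (use noiso gam in \<open>auto simp: E'_def X_def\<close>)
  define P2 where "P2 = {e. e \<subseteq> S \<and> card e = 2}"
  have cardP2: "card P2 = k * (k - 1) div 2"
    unfolding P2_def using n_subsets[OF finS, of 2] assms(4) by (simp add: choose_two)
  have P2X: "P2 \<subseteq> X"
  proof
    fix e assume "e \<in> P2"
    then obtain x y where "e = {x,y}" "x \<noteq> y" "e \<subseteq> S" unfolding P2_def by (auto simp: card_2_iff)
    thus "e \<in> X" using cl unfolding X_def by auto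
  qed
  have dc: "(\<Sum>u\<in>S. deg E u) = (\<Sum>e\<in>E. card (e \<inter> S))"
  proof -
    have "(\<Sum>u\<in>S. deg E u) = (\<Sum>u\<in>S. \<Sum>e\<in>E. if u \<in> e then 1 else 0)"
      unfolding deg_def
    proof (intro sum.cong refl)
      fix u
      have "(\<Sum>e\<in>E. if u \<in> e then 1 else (0::nat)) = card (E \<inter> {e. u \<in> e})"
        using finE by (simp add: sum.If_cases)
      also have "E \<inter> {e. u \<in> e} = {e\<in>E. u \<in> e}" by blast
      finally show "card {e\<in>E. u \<in> e} = (\<Sum>e\<in>E. if u \<in> e then 1 else 0)" by simp
    qed
    also have "\<dots> = (\<Sum>e\<in>E. \<Sum>u\<in>S. if u \<in> e then 1 else 0)" by (rule sum.swap)
    also have "\<dots> = (\<Sum>e\<in>E. card (e \<inter> S))"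
      using finS by (intro sum.cong refl) (simp add: sum.If_cases Int_commute)
    finally show ?thesis .
  qed
  have "(\<Sum>e\<in>E. card (e \<inter> S)) \<ge> (\<Sum>e\<in>X. card (e \<inter> S))"
    using finE unfolding X_def by (intro sum_mono2) auto
  moreover have "(\<Sum>e\<in>X. card (e \<inter> S)) \<ge> (\<Sum>e\<in>X. 1 + (if e \<in> P2 then 1 else 0))"
  proof (intro sum_mono)
    fix e assume e: "e \<in> X"
    have "finite e" using e EV X_def finV finite_subset by blast
    hence "card (e \<inter> S) \<ge> 1" using e X_def by (simp add: Suc_leI card_gt_0_iff)
    moreover have "e \<in> P2 \<Longrightarrow> card (e \<inter> S) = 2" unfolding P2_def by (simp add: Int_absorb2)
    ultimately show "1 + (if e \<in> P2 then 1 else 0) \<le> card (e \<inter> S)" by auto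
  qed
  moreover have "(\<Sum>e\<in>X. 1 + (if e \<in> P2 then 1 else (0::nat))) = card X + card P2"
  proof -
    have "(\<Sum>e\<in>X. 1 + (if e \<in> P2 then 1 else (0::nat))) = card X + (\<Sum>e\<in>X. if e \<in> P2 then 1 else (0::nat))"
      by (simp only: sum.distrib card_eq_sum)
    also have "(\<Sum>e\<in>X. if e \<in> P2 then 1 else (0::nat)) = card (X \<inter> P2)"
      using finX by (simp add: sum.If_cases)
    also have "X \<inter> P2 = P2" using P2X by blast
    finally show ?thesis .
  qed
  ultimately have sd: "(\<Sum>u\<in>S. deg E u) \<ge> card X + k * (k - 1) div 2"
    using dc cardP2 by linarith
  have cE': "card E' = card X - card H"
    unfolding E'_def using HX finH by (simp add: card_Diff_subset)
  have kk: "k * (k + 1) div 2 = k * (k - 1) div 2 + k"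
  proof -
    have "k * (k + 1) = k * (k - 1) + 2 * k" using assms(5) by (cases k) (auto simp: algebra_simps)
    thus ?thesis by simp
  qed
  have "card E' \<le> (\<Sum>u\<in>S. deg E u) - k * (k + 1) div 2"
    using cE' cardH sd kk assms(5) by linarith
  with binf show ?thesis using order_trans by fastforce
qed

end
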